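(* Let $n\ge2$, $0<b_1\le\dots\le b_n$, and define $S>0$ by $S^{\frac{1}{n-1}}=\frac{2^{n+6}}{3}20^{\frac{n-2}{2}}\max_{1\le k\le n}20^{\frac{k(k-1)}{2}}\frac{b_1\cdots b_n}{b_k^n}$. Let $0<a_1\le\dots\le a_n$ satisfy $a_1\cdots a_n=b_1\cdots b_n$, $\frac{a_k}{a_{k-1}}<20$ for all $2\le k\le n-1$, and $\frac{a_n}{a_k}>20^{-\frac{n-2}{2}}S^{\frac{1}{n-1}}$ for all $1\le k\le n-1$. Then $b_k>2a_k$ for all $1\le k\le n-1$. *)

theory Defs
  imports "HOL-Analysis.Analysis"
begin

end

theory Submission
  imports Defs
begin

lemma pos_mono_seq:
  fixes a :: "nat \<Rightarrow> real"
  assumes "a 1 > 0" "\<And>k. 1 \<le> k \<Longrightarrow> k < n \<Longrightarrow> a k \<le> a (k + 1)"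
  shows "\<And>i. 1 \<le> i \<Longrightarrow> i \<le> n \<Longrightarrow> a i > 0"
proof -
  fix i assume "1 \<le> i" "i \<le> n"
  then show "a i > 0"
  proof (induction i rule: dec_induct)
    case base then show ?case using assms by simp
  next
    case (step m) then show ?case using assms(2)[of m] by simp
  qed
qed

lemma mono_seq_le:
  fixes a :: "nat \<Rightarrow> real"
  assumes "\<And>k. 1 \<le> k \<Longrightarrow> k < n \<Longrightarrow> a k \<le> a (k + 1)"
  shows "\<And>i j. 1 \<le> i \<Longrightarrow> i \<le> j \<Longrightarrow> j \<le> n \<Longrightarrow> a i \<le> a j"
proof -
  fix i j assume h: "1 \<le> i" "i \<le> j" "j \<le> n"
  from h(2,3) show "a i \<le> a j"
  proof (induction j rule: dec_induct)
    case base then show ?case by simp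
  next
    case (step m) then show ?case using assms[of m] h(1) by simp
  qed
qed

lemma ratio_prod:
  fixes a :: "nat \<Rightarrow> real"
  assumes pos: "\<And>i. 1 \<le> i \<Longrightarrow> i \<le> n \<Longrightarrow> a i > 0"
    and ratio: "\<And>k. 2 \<le> k \<Longrightarrow> k \<le> n - 1 \<Longrightarrow> a k / a (k - 1) < 20"
  shows "1 \<le> k \<Longrightarrow> k \<le> n - 1 \<Longrightarrow>
     a k ^ k \<le> 20 powr (real k * (real k - 1) / 2) * (\<Prod>i=1..k. a i)"
proof (induction k rule: dec_induct)
  case base then show ?case by simp
next
  case (step m)
  have am: "a m > 0" using pos step by auto
  have am1: "a (Suc m) > 0" using pos step by auto
  have "a (Suc m) / a m < 20" using ratio[of "Suc m"] step by simp
  hence r: "a (Suc m) \<le> 20 * a m" using am by (simp add: divide_less_eq)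
  have "a (Suc m) ^ Suc m = a (Suc m) ^ m * a (Suc m)" by simp
  also have "\<dots> \<le> (20 * a m) ^ m * a (Suc m)"
    using r am1 by (intro mult_right_mono power_mono) auto
  also have "\<dots> = 20 ^ m * a m ^ m * a (Suc m)" by (simp add: power_mult_distrib)
  also have "\<dots> \<le> 20 ^ m * (20 powr (real m * (real m - 1) / 2) * (\<Prod>i=1..m. a i)) * a (Suc m)"
    using step.IH step am1 by (intro mult_right_mono mult_left_mono) auto
  also have "\<dots> = (20 powr real m * 20 powr (real m * (real m - 1) / 2)) * ((\<Prod>i=1..m. a i) * a (Suc m))"
    by (simp add: powr_realpow)
  also have "20 powr real m * 20 powr (real m * (real m - 1) / 2) = 20 powr (real (Suc m) * (real (Suc m) - 1) / 2)"
    by (simp add: powr_add[symmetric] algebra_simps add_divide_distrib diff_divide_distrib)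
  also have "(\<Prod>i=1..m. a i) * a (Suc m) = (\<Prod>i=1..Suc m. a i)"
    using step by (simp add: prod.nat_ivl_Suc')
  finally show ?case .
qed

theorem lemma3p6:
  fixes n :: nat and a b :: "nat \<Rightarrow> real" and S :: real
  assumes n2: "n \<ge> 2"
    and bpos: "b 1 > 0"
    and bmono: "\<And>k. 1 \<le> k \<Longrightarrow> k < n \<Longrightarrow> b k \<le> b (k + 1)"
    and Spos: "S > 0"
    and Sdef: "S powr (1 / (real n - 1)) =
      (2 ^ (n + 6) / 3) * 20 powr ((real n - 2) / 2) *
      (MAX k\<in>{1..n}. 20 powr (real k * (real k - 1) / 2) * (\<Prod>i=1..n. b i) / (b k) ^ n)"
    and apos: "a 1 > 0"
    and amono: "\<And>k. 1 \<le> k \<Longrightarrow> k < n \<Longrightarrow> a k \<le> a (k + 1)"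
    and prod_eq: "(\<Prod>i=1..n. a i) = (\<Prod>i=1..n. b i)"
    and ratio: "\<And>k. 2 \<le> k \<Longrightarrow> k \<le> n - 1 \<Longrightarrow> a k / a (k - 1) < 20"
    and big: "\<And>k. 1 \<le> k \<Longrightarrow> k \<le> n - 1 \<Longrightarrow>
      a n / a k > 20 powr (- ((real n - 2) / 2)) * S powr (1 / (real n - 1))"
  shows "\<forall>k. 1 \<le> k \<and> k \<le> n - 1 \<longrightarrow> b k > 2 * a k"
proof (intro allI impI, rule ccontr)
  fix k assume k: "1 \<le> k \<and> k \<le> n - 1" and nk: "\<not> b k > 2 * a k"
  have ap: "\<And>i. 1 \<le> i \<Longrightarrow> i \<le> n \<Longrightarrow> a i > 0" using pos_mono_seq[of a n, OF apos amono] by blast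
  have bp: "\<And>i. 1 \<le> i \<Longrightarrow> i \<le> n \<Longrightarrow> b i > 0" using pos_mono_seq[of b n, OF bpos bmono] by blast
  have ale: "\<And>i j. 1 \<le> i \<Longrightarrow> i \<le> j \<Longrightarrow> j \<le> n \<Longrightarrow> a i \<le> a j" using mono_seq_le[of n a, OF amono] by blast
  define B where "B = (\<Prod>i=1..n. b i)"
  define E where "E = 20 powr (real k * (real k - 1) / 2)"
  define M where "M = (MAX k\<in>{1..n}. 20 powr (real k * (real k - 1) / 2) * (\<Prod>i=1..n. b i) / (b k) ^ n)"
  define c :: real where "c = 2 ^ (n + 6) / 3"
  define x where "x = a k"
  have xp: "x > 0" using ap k x_def by auto
  have Ep: "E > 0" unfolding E_def by simp
  have Mge: "E * B / b k ^ n \<le> M" unfolding M_def E_def B_def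
    by (rule Max_ge) (use k in auto)
  have bk: "b k > 0" using bp k by auto
  have Bp: "B > 0" unfolding B_def using bp by (intro prod_pos) auto
  have M0: "M \<ge> 0" using Mge Ep Bp bk
  proof -
    have "0 \<le> E * B / b k ^ n" using Ep Bp bk by simp
    then show ?thesis using Mge by linarith
  qed
  have bkn: "b k ^ n \<le> 2 ^ n * x ^ n"
  proof -
    have "b k ^ n \<le> (2 * x) ^ n" using nk bk unfolding x_def by (intro power_mono) auto
    then show ?thesis by (simp only: power_mult_distrib)
  qed
  have up: "E * B \<le> M * (2 ^ n * x ^ n)"
  proof -
    have "E * B \<le> M * b k ^ n" using Mge bk by (simp add: divide_le_eq)
    also have "\<dots> \<le> M * (2 ^ n * x ^ n)" using bkn M0 by (rule mult_left_mono)
    finally show ?thesis .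
  qed
  have an1: "a n / a (n - 1) > c * M"
  proof -
    have "a n / a (n - 1) > 20 powr (- ((real n - 2) / 2)) * S powr (1 / (real n - 1))"
      using big[of "n - 1"] n2 by simp
    also have "20 powr (- ((real n - 2) / 2)) * S powr (1 / (real n - 1)) = 
      c * M * (20 powr (- ((real n - 2) / 2)) * 20 powr ((real n - 2) / 2))"
      unfolding Sdef c_def M_def by simp
    also have "20 powr (- ((real n - 2) / 2)) * 20 powr ((real n - 2) / 2) = (1::real)"
      by (simp add: powr_add[symmetric])
    finally show ?thesis by simp
  qed
  have anp: "a (n - 1) > 0" using ap n2 by auto
  have an: "a n > c * M * x"
  proof -
    have "a n > c * M * a (n - 1)" using an1 anp by (simp add: less_divide_eq)
    moreover have "c * M * x \<le> c * M * a (n - 1)"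
      using ale[of k "n - 1"] k M0 unfolding x_def c_def by (intro mult_left_mono) auto
    ultimately show ?thesis by simp
  qed
  have P1: "x ^ k \<le> E * (\<Prod>i=1..k. a i)"
    using ratio_prod[of n a k, OF ap ratio] k unfolding x_def E_def by auto
  have P2: "x ^ (n - 1 - k) \<le> (\<Prod>i=k+1..n-1. a i)"
  proof -
    have "(\<Prod>i=k+1..n-1. x) \<le> (\<Prod>i=k+1..n-1. a i)"
      using xp ale k unfolding x_def by (intro prod_mono) auto
    then show ?thesis by simp
  qed
  have split: "B = (\<Prod>i=1..k. a i) * (\<Prod>i=k+1..n-1. a i) * a n"
  proof -
    have "B = (\<Prod>i=1..n-1. a i) * a n"
      unfolding B_def prod_eq[symmetric] using n2
      proof -
        obtain m where m: "n = Suc m" "m \<ge> 1" using n2 by (cases n) auto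
        show "(\<Prod>i=1..n. a i) = (\<Prod>i=1..n-1. a i) * a n"
          using m by (simp add: prod.nat_ivl_Suc')
      qed
    moreover have "(\<Prod>i=1..n-1. a i) = (\<Prod>i=1..k. a i) * (\<Prod>i=k+1..n-1. a i)"
    proof -
      have "{1..n-1} = {1..k} \<union> {k+1..n-1}" using k by auto
      then show ?thesis by (simp add: prod.union_disjoint)
    qed
    ultimately show ?thesis by simp
  qed
  have kn: "k \<le> n" using k by auto
  have P1p: "(\<Prod>i=1..k. a i) \<ge> 0"
  proof (intro prod_nonneg)
    fix i assume "i \<in> {1..k}"
    then have "1 \<le> i" "i \<le> n" using kn by auto
    then show "0 \<le> a i" using ap[of i] by simp
  qed
  have P2p: "(\<Prod>i=k+1..n-1. a i) \<ge> 0"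
  proof (intro prod_nonneg)
    fix i assume "i \<in> {k+1..n-1}"
    then have "1 \<le> i" "i \<le> n" using k by auto
    then show "0 \<le> a i" using ap[of i] by simp
  qed
  have low: "E * B \<ge> x ^ k * x ^ (n - 1 - k) * a n"
  proof -
    have "x ^ k * x ^ (n - 1 - k) * a n \<le> (E * (\<Prod>i=1..k. a i)) * (\<Prod>i=k+1..n-1. a i) * a n"
      using P1 P2 xp ap[of n] n2 P2p P1p Ep
      by (intro mult_right_mono mult_mono) (auto intro: mult_nonneg_nonneg)
    then show ?thesis using split by (simp add: mult.assoc)
  qed
  have xe: "x ^ k * x ^ (n - 1 - k) = x ^ (n - 1)"
  proof -
    have "k + (n - 1 - k) = n - 1" using k by auto
    then show ?thesis by (metis power_add)
  qed
  have xn: "x ^ (n - 1) * x = x ^ n"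
  proof -
    obtain m where m: "n = Suc m" using n2 by (cases n) auto
    show ?thesis using m by (simp add: power_Suc2)
  qed
  have "x ^ (n - 1) * (c * M * x) < x ^ (n - 1) * a n"
    using an xp by simp
  hence "c * M * x ^ n < E * B" using low xe xn by (simp add: algebra_simps)
  with up have "c * M * x ^ n < M * (2 ^ n * x ^ n)" by simp
  hence "c * (M * x ^ n) < 2 ^ n * (M * x ^ n)" by (simp add: algebra_simps)
  moreover have "(2::real) ^ n \<le> c" unfolding c_def by (simp add: power_add)
  moreover have "M * x ^ n \<ge> 0" using M0 xp by simp
  ultimately show False by (meson mult_right_mono not_less)
qed

end
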